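(* If an unbounded graph matroid family $\mathcal{M}$ has the Whitney property, then it has the Lovász-Yemini property.
   Context: All graphs are finite and simple and have no isolated vertices. A graph matroid family $\mathcal{M}$ assigns to every graph $G$ a matroid $\mathcal{M}(G)$ on $E(G)$ such that (i) every graph isomorphism $V(G)\to V(H)$ induces an isomorphism $\mathcal{M}(G)\to\mathcal{M}(H)$, and (ii) for every subgraph $H$ of $G$, $\mathcal{M}(H)$ is the restriction of $\mathcal{M}(G)$ to $E(H)$. $r(G)$ is the rank of $\mathcal{M}(G)$; $\mathcal{M}$ is unbounded if $r(K_n)$ is unbounded; $G$ is $\mathcal{M}$-rigid if $r(G)=r(K_{V(G)})$. $G$ is $\mathcal{M}$-reconstructible if every matroid isomorphism $\psi:E(G)\to E(H)$ between $\mathcal{M}(G)$ and $\mathcal{M}(H)$, for any graph $H$, is induced by a graph isomorphism $\varphi$ (i.e. $\psi(uv)=\varphi(u)\varphi(v)$). $\mathcal{M}$ has the Whitney property if for some nonnegative integer $c$ every $c$-connected graph is $\mathcal{M}$-reconstructible, and the Lovász-Yemini property if for some nonnegative integer $c$ every $c$-connected graph is $\mathcal{M}$-rigid. *)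

theory Defs
  imports Main
begin

(* Vertices are natural numbers; the vertex set is the union of the edges,
   so there are no isolated vertices by construction. *)
type_synonym graph = "nat set set"

definition is_graph :: "graph \<Rightarrow> bool" where
  "is_graph G \<longleftrightarrow> finite G \<and> (\<forall>e\<in>G. card e = 2)"

definition verts :: "graph \<Rightarrow> nat set" where
  "verts G = \<Union>G"

definition complete_graph :: "nat set \<Rightarrow> graph" where
  "complete_graph V = {{u, v} | u v. u \<in> V \<and> v \<in> V \<and> u \<noteq> v}"

definition graph_iso :: "(nat \<Rightarrow> nat) \<Rightarrow> graph \<Rightarrow> graph \<Rightarrow> bool" where
  "graph_iso \<phi> G H \<longleftrightarrow> bij_betw \<phi> (verts G) (verts H) \<and>
     (\<forall>u\<in>verts G. \<forall>v\<in>verts G. {u, v} \<in> G \<longleftrightarrow> {\<phi> u, \<phi> v} \<in> H)"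

definition edge_map :: "(nat \<Rightarrow> nat) \<Rightarrow> nat set \<Rightarrow> nat set" where
  "edge_map \<phi> e = \<phi> ` e"

definition matroid :: "'e set \<Rightarrow> ('e set \<Rightarrow> bool) \<Rightarrow> bool" where
  "matroid E indep \<longleftrightarrow> finite E \<and> indep {} \<and>
     (\<forall>X. indep X \<longrightarrow> X \<subseteq> E) \<and>
     (\<forall>X Y. indep Y \<and> X \<subseteq> Y \<longrightarrow> indep X) \<and>
     (\<forall>X Y. indep X \<and> indep Y \<and> card X < card Y \<longrightarrow>
        (\<exists>y\<in>Y - X. indep (insert y X)))"

definition matroid_iso :: "('e \<Rightarrow> 'f) \<Rightarrow> 'e set \<Rightarrow> ('e set \<Rightarrow> bool) \<Rightarrow> 'f set \<Rightarrow> ('f set \<Rightarrow> bool) \<Rightarrow> bool" where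
  "matroid_iso \<psi> E1 I1 E2 I2 \<longleftrightarrow> bij_betw \<psi> E1 E2 \<and>
     (\<forall>X\<subseteq>E1. I1 X \<longleftrightarrow> I2 (\<psi> ` X))"

(* A graph matroid family: M G X means X is independent in M(G). *)
definition graph_matroid_family :: "(graph \<Rightarrow> nat set set \<Rightarrow> bool) \<Rightarrow> bool" where
  "graph_matroid_family M \<longleftrightarrow>
     (\<forall>G. is_graph G \<longrightarrow> matroid G (M G)) \<and>
     (\<forall>G H \<phi>. is_graph G \<and> is_graph H \<and> graph_iso \<phi> G H \<longrightarrow>
        matroid_iso (edge_map \<phi>) G (M G) H (M H)) \<and>
     (\<forall>G H. is_graph G \<and> H \<subseteq> G \<longrightarrow> (\<forall>X\<subseteq>H. M H X \<longleftrightarrow> M G X))"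

definition mrank :: "(graph \<Rightarrow> nat set set \<Rightarrow> bool) \<Rightarrow> graph \<Rightarrow> nat" where
  "mrank M G = Max (card ` {X. M G X})"

definition unbounded :: "(graph \<Rightarrow> nat set set \<Rightarrow> bool) \<Rightarrow> bool" where
  "unbounded M \<longleftrightarrow> (\<forall>B. \<exists>n. mrank M (complete_graph {0..<n}) > B)"

definition M_rigid :: "(graph \<Rightarrow> nat set set \<Rightarrow> bool) \<Rightarrow> graph \<Rightarrow> bool" where
  "M_rigid M G \<longleftrightarrow> mrank M G = mrank M (complete_graph (verts G))"

definition M_reconstructible :: "(graph \<Rightarrow> nat set set \<Rightarrow> bool) \<Rightarrow> graph \<Rightarrow> bool" where
  "M_reconstructible M G \<longleftrightarrow>
     (\<forall>H \<psi>. is_graph H \<and> matroid_iso \<psi> G (M G) H (M H) \<longrightarrow>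
        (\<exists>\<phi>. graph_iso \<phi> G H \<and> (\<forall>e\<in>G. \<psi> e = edge_map \<phi> e)))"

definition connected_on :: "graph \<Rightarrow> nat set \<Rightarrow> bool" where
  "connected_on G W \<longleftrightarrow>
     (\<forall>u\<in>W. \<forall>v\<in>W. (u, v) \<in> {(a, b). {a, b} \<in> G \<and> a \<in> W \<and> b \<in> W}\<^sup>*)"

definition k_connected :: "nat \<Rightarrow> graph \<Rightarrow> bool" where
  "k_connected k G \<longleftrightarrow> card (verts G) > k \<and>
     (\<forall>X. X \<subseteq> verts G \<and> card X < k \<longrightarrow> connected_on G (verts G - X))"

definition whitney_property :: "(graph \<Rightarrow> nat set set \<Rightarrow> bool) \<Rightarrow> bool" where
  "whitney_property M \<longleftrightarrow>
     (\<exists>c. \<forall>G. is_graph G \<and> k_connected c G \<longrightarrow> M_reconstructible M G)"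

definition lovasz_yemini_property :: "(graph \<Rightarrow> nat set set \<Rightarrow> bool) \<Rightarrow> bool" where
  "lovasz_yemini_property M \<longleftrightarrow>
     (\<exists>c. \<forall>G. is_graph G \<and> k_connected c G \<longrightarrow> M_rigid M G)"

end

theory Submission
  imports Defs
begin

lemma edge_form: "is_graph G \<Longrightarrow> e \<in> G \<Longrightarrow> \<exists>u v. e = {u,v} \<and> u \<noteq> v"
  unfolding is_graph_def by (metis card_2_iff)

lemma verts_finite: "is_graph G \<Longrightarrow> finite (verts G)"
  unfolding verts_def is_graph_def
  by (metis card.infinite finite_Union zero_neq_numeral)

lemma sub_K: "is_graph G \<Longrightarrow> G \<subseteq> complete_graph (verts G)"
proof
  fix e assume "is_graph G" "e \<in> G"
  then obtain u v where "e = {u,v}" "u \<noteq> v" using edge_form by blast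
  then show "e \<in> complete_graph (verts G)" using \<open>e \<in> G\<close>
    unfolding complete_graph_def verts_def by blast
qed

lemma K_mem: "u \<in> V \<Longrightarrow> v \<in> V \<Longrightarrow> {u,v} \<in> complete_graph V \<longleftrightarrow> u \<noteq> v"
  unfolding complete_graph_def by (auto simp: doubleton_eq_iff)

lemma K_graph: "finite V \<Longrightarrow> is_graph (complete_graph V)"
proof -
  assume f: "finite V"
  have "complete_graph V \<subseteq> Pow V" unfolding complete_graph_def by auto
  then have "finite (complete_graph V)" using f by (meson finite_Pow_iff finite_subset)
  moreover have "\<forall>e\<in>complete_graph V. card e = 2" unfolding complete_graph_def by auto
  ultimately show ?thesis unfolding is_graph_def by blast
qed

lemma sub_graph: "is_graph G \<Longrightarrow> H \<subseteq> G \<Longrightarrow> is_graph H"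
  unfolding is_graph_def by (meson finite_subset subsetD)

lemma verts_K: "2 \<le> card V \<Longrightarrow> verts (complete_graph V) = V"
proof
  show "verts (complete_graph V) \<subseteq> V" unfolding verts_def complete_graph_def by auto
next
  assume c: "2 \<le> card V"
  show "V \<subseteq> verts (complete_graph V)"
  proof
    fix v assume v: "v \<in> V"
    have "\<exists>u\<in>V. u \<noteq> v"
    proof (rule ccontr)
      assume "\<not> ?thesis" then have "V \<subseteq> {v}" by auto
      then have "card V \<le> card {v}" by (intro card_mono) auto
      then have "card V \<le> 1" by simp
      with c show False by simp
    qed
    then obtain u where "u \<in> V" "u \<noteq> v" by blast
    then have "{u,v} \<in> complete_graph V" using v K_mem by blast
    then show "v \<in> verts (complete_graph V)" unfolding verts_def by blast
  qed
qed

lemma conn_mono: "connected_on G W \<Longrightarrow> G \<subseteq> G' \<Longrightarrow> connected_on G' W"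
  unfolding connected_on_def
proof (intro ballI)
  fix u v assume h: "\<forall>u\<in>W. \<forall>v\<in>W. (u, v) \<in> {(a, b). {a, b} \<in> G \<and> a \<in> W \<and> b \<in> W}\<^sup>*"
    "G \<subseteq> G'" "u \<in> W" "v \<in> W"
  have "{(a, b). {a, b} \<in> G \<and> a \<in> W \<and> b \<in> W} \<subseteq> {(a, b). {a, b} \<in> G' \<and> a \<in> W \<and> b \<in> W}"
    using h(2) by auto
  then show "(u, v) \<in> {(a, b). {a, b} \<in> G' \<and> a \<in> W \<and> b \<in> W}\<^sup>*"
    using h rtrancl_mono by blast
qed

lemma kconn_mono: "k_connected k G \<Longrightarrow> G \<subseteq> G' \<Longrightarrow> verts G' = verts G \<Longrightarrow> k' \<le> k \<Longrightarrow> k_connected k' G'"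
proof -
  assume a: "k_connected k G" "G \<subseteq> G'" "verts G' = verts G" "k' \<le> k"
  have c: "card (verts G') > k'" using a unfolding k_connected_def by simp
  have "\<forall>X. X \<subseteq> verts G' \<and> card X < k' \<longrightarrow> connected_on G' (verts G' - X)"
  proof (intro allI impI)
    fix X assume X: "X \<subseteq> verts G' \<and> card X < k'"
    then have "X \<subseteq> verts G \<and> card X < k" using a by simp
    then have "connected_on G (verts G - X)" using a(1) unfolding k_connected_def by blast
    then show "connected_on G' (verts G' - X)" using conn_mono a by simp
  qed
  then show ?thesis using c unfolding k_connected_def by blast
qed

lemma degree2:
  assumes g: "is_graph G" and k: "k_connected 2 G" and v: "v \<in> verts G"
  shows "\<exists>p q. p \<noteq> q \<and> {v,p} \<in> G \<and> {v,q} \<in> G"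
proof -
  obtain e where e: "e \<in> G" "v \<in> e" using v unfolding verts_def by blast
  obtain u1 u2 where uu: "e = {u1,u2}" "u1 \<noteq> u2" using edge_form[OF g e(1)] by blast
  obtain p where p: "{v,p} \<in> G" "p \<noteq> v"
  proof (cases "v = u1")
    case True then show ?thesis using that uu e by auto
  next
    case False then have "v = u2" using uu e by auto
    then show ?thesis using that uu e by (auto simp: insert_commute)
  qed
  have pv: "p \<in> verts G" using p unfolding verts_def by blast
  have cV: "card (verts G) > 2" using k unfolding k_connected_def by simp
  have "\<exists>w\<in>verts G. w \<noteq> v \<and> w \<noteq> p"
  proof (rule ccontr)
    assume "\<not> ?thesis" then have "verts G \<subseteq> {v,p}" by auto
    then have "card (verts G) \<le> card {v,p}" by (intro card_mono) auto
    then have "card (verts G) \<le> 2" using p(2) by simp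
    with cV show False by simp
  qed
  then obtain w where w: "w \<in> verts G" "w \<noteq> v" "w \<noteq> p" by blast
  have "connected_on G (verts G - {p})" using k pv unfolding k_connected_def by auto
  then have "(v, w) \<in> {(a, b). {a, b} \<in> G \<and> a \<in> verts G - {p} \<and> b \<in> verts G - {p}}\<^sup>*"
    unfolding connected_on_def using v w p by blast
  then obtain b where b: "{v,b} \<in> G" "b \<noteq> p"
  proof (rule converse_rtranclE)
    assume "v = w" then show ?thesis using w(2) by simp
  next
    fix y assume "(v, y) \<in> {(a, b). {a, b} \<in> G \<and> a \<in> verts G - {p} \<and> b \<in> verts G - {p}}"
    then have "{v,y} \<in> G" "y \<noteq> p" by auto
    then show ?thesis using that by blast
  qed
  then show ?thesis using p by blast
qed

lemma mat_parts:
  assumes "matroid E I"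
  shows "finite E" "I {}" "\<forall>X. I X \<longrightarrow> X \<subseteq> E" "\<forall>X Y. I Y \<and> X \<subseteq> Y \<longrightarrow> I X"
    "\<forall>X Y. I X \<and> I Y \<and> card X < card Y \<longrightarrow> (\<exists>y\<in>Y - X. I (insert y X))"
  using assms unfolding matroid_def by simp_all

lemma mat_fin: "matroid E I \<Longrightarrow> finite E"
  by (rule mat_parts(1))
lemma mat_sub: "matroid E I \<Longrightarrow> I X \<Longrightarrow> X \<subseteq> E"
  using mat_parts(3) by blast
lemma mat_down: "matroid E I \<Longrightarrow> I Y \<Longrightarrow> X \<subseteq> Y \<Longrightarrow> I X"
  using mat_parts(4) by blast
lemma mat_empty: "matroid E I \<Longrightarrow> I {}"
  by (rule mat_parts(2))
lemma mat_aug: "matroid E I \<Longrightarrow> I X \<Longrightarrow> I Y \<Longrightarrow> card X < card Y \<Longrightarrow> \<exists>y\<in>Y - X. I (insert y X)"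
  using mat_parts(5) by blast

lemma extend:
  assumes m: "matroid E I" and S: "S \<subseteq> E" and Y: "Y \<subseteq> S" "I Y"
  shows "\<exists>Z. Y \<subseteq> Z \<and> Z \<subseteq> S \<and> I Z \<and> (\<forall>W. W \<subseteq> S \<and> I W \<longrightarrow> card W \<le> card Z)"
proof -
  have fE: "finite E" using m by (rule mat_fin)
  let ?P = "\<lambda>Z. Y \<subseteq> Z \<and> Z \<subseteq> S \<and> I Z"
  have "\<forall>Z. ?P Z \<longrightarrow> card Z \<le> card E"
  proof (intro allI impI)
    fix Z assume "?P Z" then have "Z \<subseteq> E" using S by blast
    then show "card Z \<le> card E" using fE by (rule card_mono[rotated])
  qed
  then have "\<exists>Z. ?P Z \<and> (\<forall>Z'. ?P Z' \<longrightarrow> card Z' \<le> card Z)"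
    using Y by (intro ex_has_greatest_nat[of ?P Y card "Suc (card E)"]) (auto simp: le_imp_less_Suc)
  then obtain Z where Z: "?P Z" "\<forall>Z'. ?P Z' \<longrightarrow> card Z' \<le> card Z" by blast
  have "\<forall>W. W \<subseteq> S \<and> I W \<longrightarrow> card W \<le> card Z"
  proof (intro allI impI, rule ccontr)
    fix W assume W: "W \<subseteq> S \<and> I W" "\<not> card W \<le> card Z"
    have "I Z" "I W" "card Z < card W" using Z(1) W by auto
    then obtain y where y: "y \<in> W - Z" "I (insert y Z)"
      using mat_aug[OF m] by blast
    have "Z \<subseteq> E" using Z(1) S by blast
    then have "finite Z" using fE by (rule finite_subset)
    then have "card (insert y Z) = card Z + 1" using y by simp
    moreover have "?P (insert y Z)" using Z(1) y W by auto
    ultimately show False using Z(2) by (metis Suc_eq_plus1 not_less_eq_eq order_refl)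
  qed
  then show ?thesis using Z by blast
qed

lemma coloop:
  assumes m: "matroid E I" and S: "S \<subseteq> E" and Z: "I Z" "Z \<subseteq> S"
    and mx: "\<forall>W. W \<subseteq> S \<and> I W \<longrightarrow> card W \<le> card Z"
    and sm: "\<forall>W. W \<subseteq> S - {e} \<and> I W \<longrightarrow> card W < card Z"
    and Y: "Y \<subseteq> S - {e}" "I Y" and e: "e \<in> S"
  shows "I (insert e Y)"
proof -
  obtain Z' where Z': "Y \<subseteq> Z'" "Z' \<subseteq> S" "I Z'" "\<forall>W. W \<subseteq> S \<and> I W \<longrightarrow> card W \<le> card Z'"
    using extend[OF m S, of Y] Y by blast
  have "card Z \<le> card Z'" using Z' Z by blast
  have "e \<in> Z'"
  proof (rule ccontr)
    assume "e \<notin> Z'" then have "Z' \<subseteq> S - {e}" using Z' by blast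
    then have "card Z' < card Z" using sm Z' by blast
    with \<open>card Z \<le> card Z'\<close> show False by simp
  qed
  then have "insert e Y \<subseteq> Z'" using Z' by blast
  then show ?thesis using mat_down[OF m] Z' by blast
qed

lemma Max_card_eq:
  assumes m: "matroid E I" and Z: "I Z" and mx: "\<forall>W. I W \<longrightarrow> card W \<le> card Z"
  shows "Max (card ` {X. I X}) = card Z"
proof -
  have "{X. I X} \<subseteq> Pow E" using mat_sub[OF m] by blast
  moreover have "finite (Pow E)" using mat_fin[OF m] by simp
  ultimately have "finite {X. I X}" by (rule finite_subset)
  then show ?thesis using Z mx by (intro Max_eqI) auto
qed

theorem lemma3p2:
  fixes M :: "graph \<Rightarrow> nat set set \<Rightarrow> bool"
  assumes "graph_matroid_family M"
    and "unbounded M"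
    and "whitney_property M"
  shows "lovasz_yemini_property M"
proof -
  have famM: "\<And>G. is_graph G \<Longrightarrow> matroid G (M G)"
    using assms(1) unfolding graph_matroid_family_def by blast
  have famI: "\<And>G H \<phi>. is_graph G \<Longrightarrow> is_graph H \<Longrightarrow> graph_iso \<phi> G H \<Longrightarrow>
      matroid_iso (edge_map \<phi>) G (M G) H (M H)"
    using assms(1) unfolding graph_matroid_family_def by blast
  have famR: "\<And>G H X. is_graph G \<Longrightarrow> H \<subseteq> G \<Longrightarrow> X \<subseteq> H \<Longrightarrow> M H X = M G X"
    using assms(1) unfolding graph_matroid_family_def by blast
  obtain c where Wc: "\<And>G. is_graph G \<Longrightarrow> k_connected c G \<Longrightarrow> M_reconstructible M G"
    using assms(3) unfolding whitney_property_def by blast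
  have recon: "\<exists>\<phi>. \<forall>e\<in>G. \<psi> e = edge_map \<phi> e"
    if "is_graph G" "k_connected c G" "is_graph H" "matroid_iso \<psi> G (M G) H (M H)" for G H \<psi>
    using Wc[OF that(1,2)] that(3,4) unfolding M_reconstructible_def by blast
  show ?thesis unfolding lovasz_yemini_property_def
  proof (intro exI[of _ "max c 3"] allI impI)
    fix G assume "is_graph G \<and> k_connected (max c 3) G"
    then have gG: "is_graph G" and kG: "k_connected (max c 3) G" by auto
    define V where "V = verts G"
    define K where "K = complete_graph V"
    have fV: "finite V" using verts_finite gG V_def by blast
    have cV: "card V > max c 3" using kG unfolding k_connected_def V_def by simp
    have gK: "is_graph K" using K_graph fV K_def by blast
    have GK: "G \<subseteq> K" using sub_K gG K_def V_def by blast
    have mK: "matroid K (M K)" using famM gK by blast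
    have vK: "verts K = V" using verts_K cV K_def by simp
    have restr: "\<And>H X. H \<subseteq> K \<Longrightarrow> X \<subseteq> H \<Longrightarrow> M H X = M K X" using famR gK by blast
    have k2: "k_connected 2 G" using kconn_mono[OF kG order_refl refl] by simp
    have deg: "\<And>v. v \<in> V \<Longrightarrow> \<exists>p q. p\<noteq>q \<and> {v,p}\<in>G \<and> {v,q} \<in> G"
      using degree2[OF gG k2] V_def by blast
    have fG: "finite G" using gG unfolding is_graph_def by blast
    have edgeV: "\<And>e. e \<in> K \<Longrightarrow> e \<subseteq> V" unfolding K_def complete_graph_def by auto
    show "M_rigid M G"
    proof (rule ccontr)
      assume nr: "\<not> M_rigid M G"
      obtain B where B: "B \<subseteq> G" "M K B" "\<forall>W. W \<subseteq> G \<and> M K W \<longrightarrow> card W \<le> card B"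
        using extend[OF mK GK, of "{}"] mat_empty[OF mK] by auto
      obtain Bk where Bk: "Bk \<subseteq> K" "M K Bk" "\<forall>W. W \<subseteq> K \<and> M K W \<longrightarrow> card W \<le> card Bk"
        using extend[OF mK order_refl, of "{}"] mat_empty[OF mK] by auto
      have fB: "finite B" using B(1) fG by (rule finite_subset)
      have "mrank M G = card B"
        unfolding mrank_def
      proof (rule Max_card_eq[OF famM[OF gG]])
        show "M G B" using restr[OF GK B(1)] B(2) by simp
        show "\<forall>W. M G W \<longrightarrow> card W \<le> card B"
        proof (intro allI impI)
          fix W assume "M G W"
          then have "W \<subseteq> G" using mat_sub[OF famM[OF gG]] by blast
          moreover then have "M K W" using restr[OF GK] \<open>M G W\<close> by blast
          ultimately show "card W \<le> card B" using B(3) by blast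
        qed
      qed
      moreover have "mrank M K = card Bk"
        unfolding mrank_def
        by (rule Max_card_eq[OF mK Bk(2)]) (use Bk(3) mat_sub[OF mK] in blast)
      ultimately have "card B \<noteq> card Bk" using nr unfolding M_rigid_def K_def V_def by simp
      moreover have "card B \<le> card Bk" using Bk(3) B GK by blast
      ultimately have lt: "card B < card Bk" by simp
      have newedge: "\<exists>y\<in>J. y \<notin> G \<and> M K (insert y B)"
        if J: "J \<subseteq> K" "M K J" "card B < card J" for J
      proof -
        obtain y where y: "y \<in> J - B" "M K (insert y B)" using mat_aug[OF mK B(2) J(2,3)] by blast
        have "y \<notin> G"
        proof
          assume "y \<in> G"
          then have "card (insert y B) \<le> card B" using B y by blast
          then show False using fB y by simp
        qed
        then show ?thesis using y by blast
      qed
      obtain x where x: "x \<in> K" "x \<notin> G" "M K (insert x B)"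
        using newedge[OF Bk(1,2) lt] Bk(1) by blast
      have coloopG: "M K (insert y Y)"
        if "y \<in> K" "y \<notin> G" "M K (insert y B)" "Y \<subseteq> G" "M K Y" for y Y
      proof (rule coloop[OF mK, of "insert y G" "insert y B" y Y])
        show "insert y G \<subseteq> K" using that GK by blast
        show "M K (insert y B)" by fact
        show "insert y B \<subseteq> insert y G" using B by blast
        show "\<forall>W. W \<subseteq> insert y G \<and> M K W \<longrightarrow> card W \<le> card (insert y B)"
        proof (intro allI impI)
          fix W assume W: "W \<subseteq> insert y G \<and> M K W"
          have W1: "W - {y} \<subseteq> G" using W by blast
          have W2: "M K (W - {y})" by (rule mat_down[OF mK, of W]) (use W in auto)
          have "card (W - {y}) \<le> card B" using B(3) W1 W2 by simp
          moreover have "finite W" using finite_subset[of W "insert y G"] W fG by simp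
          then have "card W \<le> card (W - {y}) + 1"
            by (cases "y \<in> W") (simp_all add: card_Diff_singleton_if card_gt_0_iff)
          moreover have "card (insert y B) = card B + 1"
            using fB card_insert_disjoint[OF fB, of y] that(2) B(1) by (metis Suc_eq_plus1 subsetD)
          ultimately show "card W \<le> card (insert y B)" by linarith
        qed
        show "\<forall>W. W \<subseteq> insert y G - {y} \<and> M K W \<longrightarrow> card W < card (insert y B)"
        proof (intro allI impI)
          fix W assume W: "W \<subseteq> insert y G - {y} \<and> M K W"
          then have "card W \<le> card B" using B(3) by blast
          moreover have "card (insert y B) = card B + 1"
            using fB card_insert_disjoint[OF fB, of y] that(2) B(1) by (metis Suc_eq_plus1 subsetD)
          ultimately show "card W < card (insert y B)" by simp
        qed
        show "Y \<subseteq> insert y G - {y}" using that by blast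
        show "M K Y" by fact
        show "y \<in> insert y G" by simp
      qed
      have vins: "verts (insert y G) = V" if "y \<in> K" for y
        using edgeV[OF that] unfolding V_def verts_def by auto
      have two: "y = x" if y: "y \<in> K" "y \<notin> G" "M K (insert y B)" for y
      proof (rule ccontr)
        assume yx: "y \<noteq> x"
        define Gx where "Gx = insert x G"
        define Gy where "Gy = insert y G"
        have GxK: "Gx \<subseteq> K" "Gy \<subseteq> K" using x y GK Gx_def Gy_def by auto
        have gGx: "is_graph Gx" "is_graph Gy" using sub_graph[OF gK] GxK by auto
        define \<psi> where "\<psi> = (\<lambda>f. if f = x then y else f)"
        have iso: "matroid_iso \<psi> Gx (M Gx) Gy (M Gy)"
          unfolding matroid_iso_def
        proof
          show "bij_betw \<psi> Gx Gy"
          proof (rule bij_betw_byWitness[where f'="\<lambda>f. if f = y then x else f"])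
            show "\<forall>a\<in>Gx. (if \<psi> a = y then x else \<psi> a) = a"
              unfolding \<psi>_def Gx_def using y(2) yx by auto
            show "\<forall>a'\<in>Gy. \<psi> (if a' = y then x else a') = a'"
              unfolding \<psi>_def Gy_def using x(2) yx by auto
            show "\<psi> ` Gx \<subseteq> Gy" unfolding \<psi>_def Gx_def Gy_def by auto
            show "(\<lambda>f. if f = y then x else f) ` Gy \<subseteq> Gx" unfolding Gx_def Gy_def by auto
          qed
          show "\<forall>X\<subseteq>Gx. M Gx X = M Gy (\<psi> ` X)"
          proof (intro allI impI)
            fix X assume X: "X \<subseteq> Gx"
            have im: "\<psi> ` X \<subseteq> Gy" using X unfolding \<psi>_def Gx_def Gy_def by auto
            have e1: "M Gx X = M K X" using restr[OF GxK(1) X] .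
            have e2: "M Gy (\<psi> ` X) = M K (\<psi> ` X)" using restr[OF GxK(2) im] .
            show "M Gx X = M Gy (\<psi> ` X)"
            proof (cases "x \<in> X")
              case True
              define Y where "Y = X - {x}"
              have XY: "X = insert x Y" using True Y_def by blast
              have YG: "Y \<subseteq> G" using X Y_def Gx_def by blast
              have psY: "\<psi> ` Y = id ` Y"
              proof (rule image_cong)
                fix f assume "f \<in> Y"
                then have "f \<noteq> x" using YG x(2) by blast
                then show "\<psi> f = id f" unfolding \<psi>_def by simp
              qed simp
              have "\<psi> x = y" unfolding \<psi>_def by simp
              then have pY: "\<psi> ` X = insert y Y" using psY XY by simp
              have "M K X = M K Y"
                using XY coloopG[OF x YG] mat_down[OF mK] by blast
              moreover have "M K (insert y Y) = M K Y"
                using coloopG[OF y YG] mat_down[OF mK] by blast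
              ultimately show ?thesis using e1 e2 pY by simp
            next
              case False
              have "\<psi> ` X = id ` X"
              proof (rule image_cong)
                fix f assume "f \<in> X"
                then have "f \<noteq> x" using False by blast
                then show "\<psi> f = id f" unfolding \<psi>_def by simp
              qed simp
              then have "\<psi> ` X = X" by simp
              then show ?thesis using e1 e2 by simp
            qed
          qed
        qed
        have kGx: "k_connected c Gx"
          using kconn_mono[OF kG, of Gx c] Gx_def vins[OF x(1)] V_def by auto
        obtain \<phi> where \<phi>: "\<forall>e\<in>Gx. \<psi> e = edge_map \<phi> e"
          using recon[OF gGx(1) kGx gGx(2) iso] by blast
        have fixG: "\<phi> ` g = g" if "g \<in> G" for g
        proof -
          have "g \<in> Gx" "g \<noteq> x" using that x(2) Gx_def by auto
          then have "\<psi> g = edge_map \<phi> g" "\<psi> g = g" using \<phi> unfolding \<psi>_def[symmetric] by (blast, simp add: \<psi>_def)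
          then show ?thesis unfolding edge_map_def by simp
        qed
        have fixv: "\<phi> v = v" if vV: "v \<in> V" for v
        proof -
          obtain p q where pq: "p \<noteq> q" "{v,p} \<in> G" "{v,q} \<in> G" using deg[OF vV] by blast
          have "\<phi> v \<in> {v,p}" using fixG[OF pq(2)] by blast
          moreover have "\<phi> v \<in> {v,q}" using fixG[OF pq(3)] by blast
          ultimately show ?thesis using pq(1) by blast
        qed
        have "\<phi> ` x = x"
        proof -
          have "\<phi> ` x = id ` x" using fixv edgeV[OF x(1)] by (intro image_cong) auto
          then show ?thesis by simp
        qed
        moreover have "\<psi> x = edge_map \<phi> x" using \<phi> Gx_def by blast
        ultimately have "y = x" unfolding \<psi>_def edge_map_def by simp
        with yx show False by simp
      qed
      show False
      proof (cases "\<exists>J. J \<subseteq> K - {x} \<and> M K J \<and> card B < card J")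
        case True
        then obtain J where J: "J \<subseteq> K - {x}" "M K J" "card B < card J" by blast
        then obtain y where "y \<in> J" "y \<notin> G" "M K (insert y B)" using newedge[of J] by blast
        moreover then have "y \<in> K" "y \<noteq> x" using J by auto
        ultimately show False using two by blast
      next
        case False
        then have cx: "\<forall>W. W \<subseteq> K - {x} \<and> M K W \<longrightarrow> card W \<le> card B" by (auto simp: not_less)
        obtain a b where ab: "x = {a,b}" "a \<noteq> b" using edge_form[OF gK x(1)] by blast
        have abV: "a \<in> V" "b \<in> V" using edgeV[OF x(1)] ab by auto
        obtain w where w: "w \<in> V" "w \<noteq> a" "w \<noteq> b"
        proof -
          have "\<not> V \<subseteq> {a,b}"
          proof
            assume "V \<subseteq> {a,b}"
            then have "card V \<le> card {a,b}" by (intro card_mono) auto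
            also have "\<dots> \<le> 2" by (simp add: card_insert_le_m1)
            finally show False using cV by simp
          qed
          then show ?thesis using that by blast
        qed
        obtain z where z: "z \<in> V" "z \<noteq> a" "z \<noteq> b" "z \<noteq> w"
        proof -
          have "\<not> V \<subseteq> {a,b,w}"
          proof
            assume "V \<subseteq> {a,b,w}"
            then have "card V \<le> card {a,b,w}" by (intro card_mono) auto
            also have "\<dots> \<le> 3" by (simp add: card_insert_le_m1)
            finally show False using cV by simp
          qed
          then show ?thesis using that by blast
        qed
        define \<sigma> where "\<sigma> = (\<lambda>v::nat. if v = b then w else if v = w then b else v)"
        have \<sigma>\<sigma>: "\<sigma> (\<sigma> v) = v" for v unfolding \<sigma>_def by auto
        have \<sigma>V: "\<sigma> v \<in> V" if "v \<in> V" for v unfolding \<sigma>_def using that w abV by auto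
        have giso: "graph_iso \<sigma> K K"
          unfolding graph_iso_def vK
        proof
          show "bij_betw \<sigma> V V"
            by (rule bij_betw_byWitness[where f'=\<sigma>]) (use \<sigma>\<sigma> \<sigma>V in auto)
          show "\<forall>u\<in>V. \<forall>v\<in>V. ({u, v} \<in> K) = ({\<sigma> u, \<sigma> v} \<in> K)"
          proof (intro ballI)
            fix u v assume uv: "u \<in> V" "v \<in> V"
            have "\<sigma> u = \<sigma> v \<longleftrightarrow> u = v" by (metis \<sigma>\<sigma>)
            then show "({u, v} \<in> K) = ({\<sigma> u, \<sigma> v} \<in> K)"
              unfolding K_def using K_mem uv \<sigma>V by simp
          qed
        qed
        have miso: "matroid_iso (edge_map \<sigma>) K (M K) K (M K)" using famI[OF gK gK giso] .
        have embij: "bij_betw (edge_map \<sigma>) K K" using miso unfolding matroid_iso_def by blast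
        define x2 where "x2 = {a,w}"
        have emx: "edge_map \<sigma> x = x2"
          unfolding edge_map_def ab x2_def \<sigma>_def using ab(2) w by auto
        have eminv: "edge_map \<sigma> (edge_map \<sigma> f) = f" for f
          unfolding edge_map_def image_image \<sigma>\<sigma> by simp
        have x2K: "x2 \<in> K" unfolding x2_def K_def using K_mem abV w by simp
        have x2x: "x2 \<noteq> x" unfolding x2_def ab using w ab(2) by (auto simp: doubleton_eq_iff)
        have cx2: "\<forall>W. W \<subseteq> K - {x2} \<and> M K W \<longrightarrow> card W \<le> card B"
        proof (intro allI impI)
          fix W assume W: "W \<subseteq> K - {x2} \<and> M K W"
          define J where "J = edge_map \<sigma> ` W"
          have JK: "J \<subseteq> K" using embij W unfolding J_def bij_betw_def by blast
          have xJ: "x \<notin> J"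
          proof
            assume "x \<in> J"
            then obtain f where f: "f \<in> W" "edge_map \<sigma> f = x" unfolding J_def by blast
            then have "f = x2" using eminv[of f] emx by simp
            then show False using f W by blast
          qed
          have WK: "W \<subseteq> K" using W by blast
          have MJ: "M K J" using miso WK W unfolding matroid_iso_def J_def by blast
          have inj: "inj_on (edge_map \<sigma>) W"
            using inj_on_subset[OF _ WK] embij unfolding bij_betw_def by blast
          have cJ: "card J = card W" unfolding J_def by (rule card_image[OF inj])
          have JKx: "J \<subseteq> K - {x}" using JK xJ by blast
          have "card J \<le> card B" using cx[rule_format, of J] JKx MJ by simp
          then show "card W \<le> card B" using cJ by simp
        qed
        have coloopK: "M K (insert e Y)"
          if "e \<in> K" "\<forall>W. W \<subseteq> K - {e} \<and> M K W \<longrightarrow> card W \<le> card B" "Y \<subseteq> K - {e}" "M K Y" for e Y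
        proof (rule coloop[OF mK order_refl Bk(2) Bk(1) Bk(3)])
          show "\<forall>W. W \<subseteq> K - {e} \<and> M K W \<longrightarrow> card W < card Bk" using that(2) lt by (meson le_less_trans)
        qed (use that in auto)
        define \<psi> where "\<psi> = (\<lambda>f. if f = x then x2 else if f = x2 then x else f)"
        have \<psi>\<psi>: "\<psi> (\<psi> f) = f" for f unfolding \<psi>_def using x2x by auto
        have \<psi>K: "\<psi> f \<in> K" if "f \<in> K" for f unfolding \<psi>_def using that x(1) x2K by auto
        have iso2: "matroid_iso \<psi> K (M K) K (M K)"
          unfolding matroid_iso_def
        proof
          show "bij_betw \<psi> K K"
            by (rule bij_betw_byWitness[where f'=\<psi>]) (use \<psi>\<psi> \<psi>K in auto)
          show "\<forall>X\<subseteq>K. M K X = M K (\<psi> ` X)"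
          proof (intro allI impI)
            fix X assume X: "X \<subseteq> K"
            show "M K X = M K (\<psi> ` X)"
            proof (cases "x \<in> X \<longleftrightarrow> x2 \<in> X")
              case True
              have memX: "\<psi> f \<in> X" if fX: "f \<in> X" for f
              proof -
                have i1: "x \<in> X \<Longrightarrow> x2 \<in> X" and i2: "x2 \<in> X \<Longrightarrow> x \<in> X" using True by blast+
                show ?thesis
                proof (cases "f = x")
                  case True then show ?thesis unfolding \<psi>_def using i1 fX by simp
                next
                  case False
                  show ?thesis
                  proof (cases "f = x2")
                    case True then show ?thesis unfolding \<psi>_def using i2 fX by simp
                  next
                    case False then show ?thesis unfolding \<psi>_def using \<open>f \<noteq> x\<close> fX by simp
                  qed
                qed
              qed
              have "\<psi> ` X = X"
              proof
                show "\<psi> ` X \<subseteq> X" using memX by blast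
                show "X \<subseteq> \<psi> ` X"
                proof
                  fix f assume "f \<in> X"
                  then have "\<psi> f \<in> X" by (rule memX)
                  then show "f \<in> \<psi> ` X" using \<psi>\<psi>[of f] by (metis imageI)
                qed
              qed
              then show ?thesis by simp
            next
              case False
              then consider "x \<in> X" "x2 \<notin> X" | "x2 \<in> X" "x \<notin> X" by blast
              then show ?thesis
              proof cases
                case 1
                define Y where "Y = X - {x}"
                have XY: "X = insert x Y" using 1 Y_def by blast
                have psY: "\<psi> ` Y = id ` Y"
                proof (rule image_cong)
                  fix f assume "f \<in> Y"
                  then have "f \<noteq> x" "f \<noteq> x2" using 1 Y_def by auto
                  then show "\<psi> f = id f" unfolding \<psi>_def by simp
                qed simp
                have "\<psi> x = x2" unfolding \<psi>_def using x2x by simp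
                then have pY: "\<psi> ` X = insert x2 Y" using psY XY by simp
                have Y1: "Y \<subseteq> K - {x}" "Y \<subseteq> K - {x2}" using X 1 Y_def by auto
                have "M K X = M K Y"
                  using XY coloopK[OF x(1) cx Y1(1)] mat_down[OF mK] by blast
                moreover have "M K (insert x2 Y) = M K Y"
                  using coloopK[OF x2K cx2 Y1(2)] mat_down[OF mK] by blast
                ultimately show ?thesis using pY by simp
              next
                case 2
                define Y where "Y = X - {x2}"
                have XY: "X = insert x2 Y" using 2 Y_def by blast
                have psY: "\<psi> ` Y = id ` Y"
                proof (rule image_cong)
                  fix f assume "f \<in> Y"
                  then have "f \<noteq> x" "f \<noteq> x2" using 2 Y_def by auto
                  then show "\<psi> f = id f" unfolding \<psi>_def by simp
                qed simp
                have "\<psi> x2 = x" unfolding \<psi>_def using x2x by simp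
                then have pY: "\<psi> ` X = insert x Y" using psY XY by simp
                have Y1: "Y \<subseteq> K - {x}" "Y \<subseteq> K - {x2}" using X 2 Y_def by auto
                have "M K X = M K Y"
                  using XY coloopK[OF x2K cx2 Y1(2)] mat_down[OF mK] by blast
                moreover have "M K (insert x Y) = M K Y"
                  using coloopK[OF x(1) cx Y1(1)] mat_down[OF mK] by blast
                ultimately show ?thesis using pY by simp
              qed
            qed
          qed
        qed
        have kK: "k_connected c K"
          unfolding k_connected_def vK
        proof
          show "c < card V" using cV by simp
          show "\<forall>X. X \<subseteq> V \<and> card X < c \<longrightarrow> connected_on K (V - X)"
            unfolding connected_on_def
          proof (intro allI impI ballI)
            fix X u v assume uv: "u \<in> V - X" "v \<in> V - X"
            show "(u, v) \<in> {(a, b). {a, b} \<in> K \<and> a \<in> V - X \<and> b \<in> V - X}\<^sup>*"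
            proof (cases "u = v")
              case True then show ?thesis by simp
            next
              case False
              then have "{u,v} \<in> K" unfolding K_def using K_mem uv by simp
              then show ?thesis using uv by (intro r_into_rtrancl) simp
            qed
          qed
        qed
        obtain \<phi> where \<phi>: "\<forall>e\<in>K. \<psi> e = edge_map \<phi> e"
          using recon[OF gK kK gK iso2] by blast
        have bzK: "{b,z} \<in> K" unfolding K_def using K_mem abV z by simp
        have "\<psi> {b,z} = {b,z}" unfolding \<psi>_def ab x2_def using z w ab(2)
          by (auto simp: doubleton_eq_iff)
        then have "\<phi> ` {b,z} = {b,z}" using \<phi> bzK unfolding edge_map_def by metis
        then have p1: "\<phi> b \<in> {b,z}" by blast
        have "\<psi> x = x2" unfolding \<psi>_def by simp
        then have "\<phi> ` {a,b} = {a,w}" using \<phi> x(1) unfolding edge_map_def ab x2_def by metis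
        then have p2: "\<phi> b \<in> {a,w}" by blast
        show False using p1 p2 ab(2) z w by auto
      qed
    qed
  qed
qed

end
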